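(* Let $(\omega_t)_{t\ge1}$ be any sequence of $(0,1)$-valued random variables with each $\omega_t$ $\mathcal{F}_{t-1}$-measurable, and define the e-LORD testing levels recursively by $\alpha_1=\alpha\omega_1$ and, for $t\ge2$, $$\alpha_t=\omega_t\Big(\alpha-\sum_{j=1}^{t-1}\frac{\alpha_j}{R_{j-1}+1}\Big)(R_{t-1}+1).$$ Then for all $t\ge1$, $\alpha_t=\alpha\,(R_{t-1}+1)\,\omega_t\prod_{j=1}^{t-1}(1-\omega_j)$, each $\alpha_t$ is positive and $\mathcal{F}_{t-1}$-measurable, and $\sum_{j=1}^t\frac{\alpha_j}{R_{j-1}+1}=\alpha\big(1-\prod_{j=1}^t(1-\omega_j)\big)\le\alpha$. Consequently, if the e-values are valid ($\mathbb{E}[e_t\mid\mathcal{F}_{t-1}]\le1$ a.s. whenever $\theta_t=0$), then $\mathrm{FDR}(t)\le\alpha$ for all $t\ge1$.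
   Context: Let $\alpha\in(0,1)$ be a target level. Hypotheses are indexed by $t=1,2,\dots$; $\theta_t\in\{0,1\}$ is a fixed (non-random) indicator with $\theta_t=0$ iff the $t$-th null hypothesis is true. $e_1,e_2,\dots$ are nonnegative random variables (e-values). The decisions are $\delta_t=\mathbb{1}\{e_t\ge 1/\alpha_t\}$. Let $\mathcal{F}_t=\sigma(\delta_1,\dots,\delta_t)$, $\mathcal{F}_0$ trivial. $R_t=\sum_{j=1}^t\delta_j$, $R_0=0$. $\mathcal{H}_0(t)=\{j\le t:\theta_j=0\}$. $\mathrm{FDR}(t)=\mathbb{E}\big[\sum_{j\in\mathcal{H}_0(t)}\delta_j/(R_t\vee 1)\big]$. *)

theory Defs
  imports "HOL-Probability.Probability"
begin

definition dec :: "(nat \<Rightarrow> 'a \<Rightarrow> real) \<Rightarrow> (nat \<Rightarrow> 'a \<Rightarrow> real) \<Rightarrow> nat \<Rightarrow> 'a \<Rightarrow> real" where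
  "dec al e t x = (if e t x \<ge> 1 / al t x then 1 else 0)"

definition rej :: "(nat \<Rightarrow> 'a \<Rightarrow> real) \<Rightarrow> (nat \<Rightarrow> 'a \<Rightarrow> real) \<Rightarrow> nat \<Rightarrow> 'a \<Rightarrow> real" where
  "rej al e t x = (\<Sum>j\<in>{1..t}. dec al e j x)"

definition filt :: "'a measure \<Rightarrow> (nat \<Rightarrow> 'a \<Rightarrow> real) \<Rightarrow> (nat \<Rightarrow> 'a \<Rightarrow> real) \<Rightarrow> nat \<Rightarrow> 'a measure" where
  "filt M al e t = sigma (space M)
     (\<Union>j\<in>{1..t}. {dec al e j -` B \<inter> space M | B. B \<in> sets borel})"

definition FDR :: "'a measure \<Rightarrow> (nat \<Rightarrow> nat) \<Rightarrow> (nat \<Rightarrow> 'a \<Rightarrow> real) \<Rightarrow> (nat \<Rightarrow> 'a \<Rightarrow> real) \<Rightarrow> nat \<Rightarrow> real" where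
  "FDR M \<theta> al e t = (LINT x|M. (\<Sum>j\<in>{j\<in>{1..t}. \<theta> j = 0}. dec al e j x) / max (rej al e t x) 1)"

end

theory Submission
  imports Defs
begin

lemma alg_rec:
  fixes a r w :: "nat \<Rightarrow> real" and \<alpha> :: real
  assumes a1: "a 1 = \<alpha> * w 1" and r1: "r 1 = 1"
    and at: "\<And>t. t \<ge> 2 \<Longrightarrow> a t = w t * (\<alpha> - (\<Sum>j\<in>{1..t-1}. a j / r j)) * r t"
    and rpos: "\<And>t. r t > 0"
  shows "t \<ge> 1 \<Longrightarrow> a t = \<alpha> * r t * w t * (\<Prod>j\<in>{1..t-1}. (1 - w j))
     \<and> (\<Sum>j\<in>{1..t}. a j / r j) = \<alpha> * (1 - (\<Prod>j\<in>{1..t}. (1 - w j)))"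
proof (induction t)
  case 0 then show ?case by simp
next
  case (Suc n)
  show ?case
  proof (cases "n = 0")
    case True then show ?thesis using a1 r1 by simp
  next
    case False
    then have IH: "(\<Sum>j\<in>{1..n}. a j / r j) = \<alpha> * (1 - (\<Prod>j\<in>{1..n}. (1 - w j)))"
      using Suc.IH by simp
    have A: "a (Suc n) = w (Suc n) * (\<alpha> - (\<Sum>j\<in>{1..n}. a j / r j)) * r (Suc n)"
      using at[of "Suc n"] False by simp
    have A2: "a (Suc n) = \<alpha> * r (Suc n) * w (Suc n) * (\<Prod>j\<in>{1..n}. (1 - w j))"
      unfolding A IH by (simp add: algebra_simps)
    have "(\<Sum>j\<in>{1..Suc n}. a j / r j) = (\<Sum>j\<in>{1..n}. a j / r j) + a (Suc n) / r (Suc n)"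
      by simp
    also have "\<dots> = \<alpha> * (1 - (\<Prod>j\<in>{1..n}. (1 - w j))) + \<alpha> * w (Suc n) * (\<Prod>j\<in>{1..n}. (1 - w j))"
      unfolding IH A2 using rpos[of "Suc n"] by simp
    also have "\<dots> = \<alpha> * (1 - (\<Prod>j\<in>{1..Suc n}. (1 - w j)))"
      by (simp add: algebra_simps)
    finally show ?thesis using A2 by simp
  qed
qed

theorem mainTheorem11:
  fixes M :: "'a measure" and \<alpha> :: real and \<theta> :: "nat \<Rightarrow> nat"
    and e \<omega> al :: "nat \<Rightarrow> 'a \<Rightarrow> real"
  assumes "prob_space M"
    and "0 < \<alpha>" "\<alpha> < 1"
    and "\<forall>t. \<theta> t \<in> {0, 1}"
    and e_rv: "\<forall>t\<ge>1. e t \<in> borel_measurable M"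
    and e_nonneg: "\<forall>t\<ge>1. \<forall>x\<in>space M. 0 \<le> e t x"
    and \<omega>_rv: "\<forall>t\<ge>1. \<omega> t \<in> borel_measurable M"
    and \<omega>_range: "\<forall>t\<ge>1. \<forall>x\<in>space M. 0 < \<omega> t x \<and> \<omega> t x < 1"
    and \<omega>_pred: "\<forall>t\<ge>1. \<omega> t \<in> borel_measurable (filt M al e (t - 1))"
    and al_1: "\<forall>x\<in>space M. al 1 x = \<alpha> * \<omega> 1 x"
    and al_t: "\<forall>t\<ge>2. \<forall>x\<in>space M. al t x =
        \<omega> t x * (\<alpha> - (\<Sum>j\<in>{1..t-1}. al j x / (rej al e (j - 1) x + 1))) * (rej al e (t - 1) x + 1)"
  shows "(\<forall>t\<ge>1. \<forall>x\<in>space M.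
            al t x = \<alpha> * (rej al e (t - 1) x + 1) * \<omega> t x * (\<Prod>j\<in>{1..t-1}. (1 - \<omega> j x)))
       \<and> (\<forall>t\<ge>1. \<forall>x\<in>space M. 0 < al t x)
       \<and> (\<forall>t\<ge>1. al t \<in> borel_measurable (filt M al e (t - 1)))
       \<and> (\<forall>t\<ge>1. \<forall>x\<in>space M.
            (\<Sum>j\<in>{1..t}. al j x / (rej al e (j - 1) x + 1)) = \<alpha> * (1 - (\<Prod>j\<in>{1..t}. (1 - \<omega> j x)))
          \<and> \<alpha> * (1 - (\<Prod>j\<in>{1..t}. (1 - \<omega> j x))) \<le> \<alpha>)
       \<and> ((\<forall>t\<ge>1. \<theta> t = 0 \<longrightarrow>
              (AE x in M. nn_cond_exp M (filt M al e (t - 1)) (\<lambda>y. ennreal (e t y)) x \<le> 1))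
          \<longrightarrow> (\<forall>t\<ge>1. FDR M \<theta> al e t \<le> \<alpha>))"
proof -
  note P = assms(1)
  define F where "F = filt M al e"
  define G where "G n = (\<Union>j\<in>{1..n}. {dec al e j -` B \<inter> space M | B. B \<in> sets borel})" for n
  have spF: "space (F n) = space M" for n
    unfolding F_def filt_def by (simp add: space_measure_of_conv)
  have GP: "G n \<subseteq> Pow (space M)" for n unfolding G_def by auto
  have setsF: "sets (F n) = sigma_sets (space M) (G n)" for n
    unfolding F_def filt_def G_def[symmetric] using GP by (simp add: sets_measure_of_conv)
  have Fmono: "n \<le> m \<Longrightarrow> subalgebra (F m) (F n)" for n m
    unfolding subalgebra_def spF setsF
    apply (auto intro!: sigma_sets_subseteq simp: G_def)
    subgoal for j B by (rule bexI[of _ j]) auto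
    done
  have mmono: "n \<le> m \<Longrightarrow> f \<in> borel_measurable (F n) \<Longrightarrow> f \<in> borel_measurable (F m)" for n m f
    by (rule measurable_from_subalg[OF Fmono])
  have dec_meas: "1 \<le> j \<Longrightarrow> j \<le> n \<Longrightarrow> dec al e j \<in> borel_measurable (F n)" for j n
  proof -
    assume j: "1 \<le> j" "j \<le> n"
    show ?thesis
    proof (rule measurableI)
      fix B :: "real set" assume B: "B \<in> sets borel"
      have m: "dec al e j -` B \<inter> space M \<in> {dec al e j -` C \<inter> space M | C. C \<in> sets borel}"
        using B by blast
      have "dec al e j -` B \<inter> space M \<in> G n" unfolding G_def
        using j by (intro UN_I[where B="\<lambda>j. {dec al e j -` C \<inter> space M | C. C \<in> sets borel}", OF _ m]) simp
      then show "dec al e j -` B \<inter> space (F n) \<in> sets (F n)" unfolding setsF spF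
        by (rule sigma_sets.Basic)
    qed simp
  qed
  have rej_eq: "rej al e n = (\<lambda>x. \<Sum>j\<in>{1..n}. dec al e j x)" for n
    by (rule ext) (simp add: rej_def)
  have rej_meas: "n \<le> m \<Longrightarrow> rej al e n \<in> borel_measurable (F m)" for n m
    unfolding rej_eq by (rule borel_measurable_sum) (auto intro: dec_meas)
  have dec01: "dec al e j x = 0 \<or> dec al e j x = 1" for j x by (simp add: dec_def)
  have dec_nn: "0 \<le> dec al e j x" for j x by (simp add: dec_def)
  have rej_nn: "0 \<le> rej al e n x" for n x unfolding rej_def by (rule sum_nonneg) (simp add: dec_nn)
  have CF: "\<And>t. t \<ge> 1 \<Longrightarrow> al t x = \<alpha> * (rej al e (t - 1) x + 1) * \<omega> t x * (\<Prod>j\<in>{1..t-1}. (1 - \<omega> j x))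
     \<and> (\<Sum>j\<in>{1..t}. al j x / (rej al e (j - 1) x + 1)) = \<alpha> * (1 - (\<Prod>j\<in>{1..t}. (1 - \<omega> j x)))"
    if x: "x \<in> space M" for x
  proof -
    fix t :: nat assume t: "t \<ge> 1"
    show "?thesis t"
    proof (rule alg_rec[of "\<lambda>t. al t x" \<alpha> "\<lambda>t. \<omega> t x" "\<lambda>t. rej al e (t - 1) x + 1", OF _ _ _ _ t])
      show "al 1 x = \<alpha> * \<omega> 1 x" using al_1 x by blast
      show "rej al e (1 - 1) x + 1 = 1" by (simp add: rej_def)
      fix s :: nat
      show "0 < rej al e (s - 1) x + 1" using rej_nn[of "s - 1" x] by linarith
      assume "2 \<le> s"
      then show "al s x = \<omega> s x * (\<alpha> - (\<Sum>j = 1..s - 1. al j x / (rej al e (j - 1) x + 1))) * (rej al e (s - 1) x + 1)"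
        using al_t x by blast
    qed
  qed
  have prodpos: "0 < (\<Prod>j\<in>{1..n}. (1 - \<omega> j x))" if x: "x \<in> space M" for n x
    by (rule prod_pos) (use \<omega>_range x in auto)
  have part1: "\<forall>t\<ge>1. \<forall>x\<in>space M.
            al t x = \<alpha> * (rej al e (t - 1) x + 1) * \<omega> t x * (\<Prod>j\<in>{1..t-1}. (1 - \<omega> j x))"
    using CF by blast
  have alpos: "\<forall>t\<ge>1. \<forall>x\<in>space M. 0 < al t x"
  proof (intro allI impI ballI)
    fix t :: nat and x assume t: "1 \<le> t" and x: "x \<in> space M"
    have "0 < \<alpha> * (rej al e (t - 1) x + 1) * \<omega> t x * (\<Prod>j\<in>{1..t-1}. (1 - \<omega> j x))"
      using assms(2) rej_nn[of "t-1" x] \<omega>_range t x prodpos[OF x, of "t-1"]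
      by (intro mult_pos_pos) (auto simp: add_nonneg_pos)
    moreover have "al t x = \<alpha> * (rej al e (t - 1) x + 1) * \<omega> t x * (\<Prod>j\<in>{1..t-1}. (1 - \<omega> j x))"
      using part1 t x by blast
    ultimately show "0 < al t x" by simp
  qed
  have al_meas: "al t \<in> borel_measurable (F (t - 1))" if t: "t \<ge> 1" for t
  proof -
    have mR: "(\<lambda>x. \<alpha> * (rej al e (t - 1) x + 1) * \<omega> t x * (\<Prod>j\<in>{1..t-1}. (1 - \<omega> j x))) \<in> borel_measurable (F (t - 1))"
    proof (intro borel_measurable_times borel_measurable_add borel_measurable_prod borel_measurable_diff
        borel_measurable_const)
      show "rej al e (t - 1) \<in> borel_measurable (F (t - 1))" by (rule rej_meas) simp
      show "\<omega> t \<in> borel_measurable (F (t - 1))" using \<omega>_pred t unfolding F_def by blast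
      fix j
      show "j \<in> {1..t-1} \<Longrightarrow> \<omega> j \<in> borel_measurable (F (t - 1))"
      proof -
        assume j: "j \<in> {1..t-1}"
        have "\<omega> j \<in> borel_measurable (F (j - 1))" using \<omega>_pred j unfolding F_def by simp
        moreover have "j - 1 \<le> t - 1" using j by auto
        ultimately show ?thesis using mmono[of "j - 1" "t - 1" "\<omega> j"] by blast
      qed
    qed
    have eq: "\<And>x. x \<in> space (F (t - 1)) \<Longrightarrow> al t x = \<alpha> * (rej al e (t - 1) x + 1) * \<omega> t x * (\<Prod>j\<in>{1..t-1}. (1 - \<omega> j x))"
      using part1 t unfolding spF by blast
    show ?thesis by (rule measurable_cong[THEN iffD2, OF eq mR])
  qed
  have part3: "\<forall>t\<ge>1. \<forall>x\<in>space M.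
            (\<Sum>j\<in>{1..t}. al j x / (rej al e (j - 1) x + 1)) = \<alpha> * (1 - (\<Prod>j\<in>{1..t}. (1 - \<omega> j x)))
          \<and> \<alpha> * (1 - (\<Prod>j\<in>{1..t}. (1 - \<omega> j x))) \<le> \<alpha>"
  proof (intro allI impI ballI conjI)
    fix t :: nat and x assume t: "1 \<le> t" and x: "x \<in> space M"
    show "(\<Sum>j\<in>{1..t}. al j x / (rej al e (j - 1) x + 1)) = \<alpha> * (1 - (\<Prod>j\<in>{1..t}. (1 - \<omega> j x)))"
      using CF[OF x t] by blast
    show "\<alpha> * (1 - (\<Prod>j\<in>{1..t}. (1 - \<omega> j x))) \<le> \<alpha>"
      using prodpos[OF x, of t] assms(2) by simp
  qed
  have subF: "subalgebra M (F n)" for n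
  proof (induction n rule: less_induct)
    case (less n)
    have "G n \<subseteq> sets M"
    proof
      fix A assume "A \<in> G n"
      then obtain j B where j: "1 \<le> j" "j \<le> n" and B: "B \<in> sets borel" and A: "A = dec al e j -` B \<inter> space M"
        unfolding G_def by auto
      have "al j \<in> borel_measurable M"
        using measurable_from_subalg[OF less[of "j - 1"] al_meas[of j]] j by auto
      moreover have "e j \<in> borel_measurable M" using e_rv j by auto
      ultimately have "dec al e j \<in> borel_measurable M"
      proof -
        assume a: "al j \<in> borel_measurable M" and ee: "e j \<in> borel_measurable M"
        have eq: "dec al e j = (\<lambda>x. if 1 / al j x \<le> e j x then 1 else 0)"
          by (rule ext) (simp add: dec_def)
        have "(\<lambda>x. 1 / al j x) \<in> borel_measurable M"
          using a by (intro borel_measurable_divide borel_measurable_const)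
        then have "{x \<in> space M. 1 / al j x \<le> e j x} \<in> sets M"
          using ee by (rule borel_measurable_le)
        then show ?thesis unfolding eq
          by (intro measurable_If measurable_const) auto
      qed
      then show "A \<in> sets M" unfolding A using B by (rule measurable_sets)
    qed
    then show ?case unfolding subalgebra_def spF setsF
      using sets.sigma_sets_subset[of "G n" M] by simp
  qed
  have part5: "(\<forall>t\<ge>1. \<theta> t = 0 \<longrightarrow>
              (AE x in M. nn_cond_exp M (filt M al e (t - 1)) (\<lambda>y. ennreal (e t y)) x \<le> 1))
          \<longrightarrow> (\<forall>t\<ge>1. FDR M \<theta> al e t \<le> \<alpha>)"
  proof (intro impI allI)
    assume H: "\<forall>t\<ge>1. \<theta> t = 0 \<longrightarrow>
              (AE x in M. nn_cond_exp M (filt M al e (t - 1)) (\<lambda>y. ennreal (e t y)) x \<le> 1)"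
    fix t :: nat assume t: "1 \<le> t"
    interpret prob_space M by (rule P)
    define D where "D = {j\<in>{1..t}. \<theta> j = 0}"
    define g where "g = (\<lambda>j x. al j x / (rej al e (j - 1) x + 1))"
    define f where "f = (\<lambda>x. (\<Sum>j\<in>D. dec al e j x) / max (rej al e t x) 1)"
    have finD: "finite D" and Dsub: "D \<subseteq> {1..t}" by (auto simp: D_def)
    have toM: "h \<in> borel_measurable (F n) \<Longrightarrow> h \<in> borel_measurable M" for h :: "'a \<Rightarrow> real" and n
      by (rule measurable_from_subalg[OF subF])
    have decM: "dec al e j \<in> borel_measurable M" if "1 \<le> j" for j
      using toM[OF dec_meas[of j j]] that by simp
    have rejM: "rej al e n \<in> borel_measurable M" for n
      using toM[OF rej_meas[of n n]] by simp
    have gF: "g j \<in> borel_measurable (F (j - 1))" if j: "1 \<le> j" for j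
    proof -
      have "(\<lambda>x. al j x / (rej al e (j - 1) x + 1)) \<in> borel_measurable (F (j - 1))"
        using al_meas[OF j] rej_meas[of "j - 1" "j - 1"]
        by (intro borel_measurable_divide borel_measurable_add borel_measurable_const) auto
      then show ?thesis unfolding g_def by simp
    qed
    have gM: "g j \<in> borel_measurable M" if "1 \<le> j" for j using toM[OF gF[OF that]] .
    have eM: "e j \<in> borel_measurable M" if "1 \<le> j" for j using e_rv that by blast
    have g_nn: "0 \<le> g j x" if "1 \<le> j" "x \<in> space M" for j x
      using alpos that rej_nn[of "j - 1" x] unfolding g_def
      by (intro divide_nonneg_pos) (auto simp: less_imp_le add_nonneg_pos)
    have fM: "f \<in> borel_measurable M"
      unfolding f_def using finD Dsub
      by (intro borel_measurable_divide borel_measurable_max borel_measurable_const rejM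
            borel_measurable_sum decM) auto
    have f_nn: "0 \<le> f x" for x
      unfolding f_def by (intro divide_nonneg_nonneg sum_nonneg dec_nn) auto
    have ptw: "f x \<le> (\<Sum>j\<in>D. g j x * e j x)" if x: "x \<in> space M" for x
    proof -
      have "f x = (\<Sum>j\<in>D. dec al e j x / max (rej al e t x) 1)"
        unfolding f_def by (simp add: sum_divide_distrib)
      also have "\<dots> \<le> (\<Sum>j\<in>D. g j x * e j x)"
      proof (rule sum_mono)
        fix j assume "j \<in> D"
        then have j: "1 \<le> j" "j \<le> t" using Dsub by auto
        have alp: "0 < al j x" using alpos j x by auto
        have enn: "0 \<le> e j x" using e_nonneg j x by auto
        define r where "r = rej al e (j - 1) x"
        have rnn: "0 \<le> r" unfolding r_def by (rule rej_nn)
        show "dec al e j x / max (rej al e t x) 1 \<le> g j x * e j x"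
        proof (cases "1 / al j x \<le> e j x")
          case True
          then have d1: "dec al e j x = 1" by (simp add: dec_def)
          obtain k where k: "j = Suc k" using j by (cases j) auto
          have "rej al e j x = r + dec al e j x"
            unfolding r_def rej_def k by simp
          moreover have "rej al e j x \<le> rej al e t x"
            unfolding rej_def using j by (intro sum_mono2) (auto simp: dec_nn)
          ultimately have rt: "r + 1 \<le> max (rej al e t x) 1" using d1 by simp
          have ae1: "1 \<le> al j x * e j x" using True alp by (simp add: divide_le_eq mult.commute)
          have "dec al e j x / max (rej al e t x) 1 = 1 / max (rej al e t x) 1" using d1 by simp
          also have "\<dots> \<le> 1 / (r + 1)"
            using rt rnn by (intro divide_left_mono) auto
          also have "\<dots> \<le> (al j x * e j x) / (r + 1)"
            using ae1 rnn by (intro divide_right_mono) auto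
          also have "\<dots> = g j x * e j x" unfolding g_def r_def by simp
          finally show ?thesis .
        next
          case False
          then have "dec al e j x = 0" by (simp add: dec_def)
          then show ?thesis using g_nn[OF j(1) x] enn by simp
        qed
      qed
      finally show ?thesis .
    qed
    have "(\<integral>\<^sup>+x. ennreal (f x) \<partial>M) \<le> (\<integral>\<^sup>+x. (\<Sum>j\<in>D. ennreal (g j x) * ennreal (e j x)) \<partial>M)"
    proof (rule nn_integral_mono)
      fix x assume x: "x \<in> space M"
      have "ennreal (f x) \<le> ennreal (\<Sum>j\<in>D. g j x * e j x)" using ptw[OF x] by (rule ennreal_leI)
      also have "\<dots> = (\<Sum>j\<in>D. ennreal (g j x * e j x))"
        using Dsub g_nn e_nonneg x by (intro sum_ennreal[symmetric] mult_nonneg_nonneg) auto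
      also have "\<dots> = (\<Sum>j\<in>D. ennreal (g j x) * ennreal (e j x))"
        using Dsub g_nn e_nonneg x by (intro sum.cong refl ennreal_mult) auto
      finally show "ennreal (f x) \<le> (\<Sum>j\<in>D. ennreal (g j x) * ennreal (e j x))" .
    qed
    also have "\<dots> = (\<Sum>j\<in>D. \<integral>\<^sup>+x. ennreal (g j x) * ennreal (e j x) \<partial>M)"
      using Dsub gM eM
      by (intro nn_integral_sum borel_measurable_times_ennreal measurable_compose[OF _ measurable_ennreal]) auto
    also have "\<dots> = (\<Sum>j\<in>D. \<integral>\<^sup>+x. ennreal (g j x) * nn_cond_exp M (F (j - 1)) (\<lambda>y. ennreal (e j y)) x \<partial>M)"
    proof (rule sum.cong[OF refl])
      fix j assume "j \<in> D"
      then have j: "1 \<le> j" using Dsub by auto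
      have sfs: "sigma_finite_subalgebra M (F (j - 1))"
        by (rule finite_measure_subalgebra_is_sigma_finite)
          (simp add: finite_measure_subalgebra_def finite_measure_subalgebra_axioms_def
             finite_measure_axioms subF)
      show "(\<integral>\<^sup>+x. ennreal (g j x) * ennreal (e j x) \<partial>M) =
            (\<integral>\<^sup>+x. ennreal (g j x) * nn_cond_exp M (F (j - 1)) (\<lambda>y. ennreal (e j y)) x \<partial>M)"
        using gF[OF j] eM[OF j]
        by (intro sigma_finite_subalgebra.nn_cond_exp_intg[OF sfs, symmetric]
              measurable_compose[OF _ measurable_ennreal]) auto
    qed
    also have "\<dots> \<le> (\<Sum>j\<in>D. \<integral>\<^sup>+x. ennreal (g j x) \<partial>M)"
    proof (rule sum_mono)
      fix j assume "j \<in> D"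
      then have j: "1 \<le> j" "\<theta> j = 0" using Dsub by (auto simp: D_def)
      have ae: "AE x in M. nn_cond_exp M (F (j - 1)) (\<lambda>y. ennreal (e j y)) x \<le> 1"
        using H j unfolding F_def by blast
      show "(\<integral>\<^sup>+x. ennreal (g j x) * nn_cond_exp M (F (j - 1)) (\<lambda>y. ennreal (e j y)) x \<partial>M)
          \<le> (\<integral>\<^sup>+x. ennreal (g j x) \<partial>M)"
      proof (rule nn_integral_mono_AE)
        show "AE x in M. ennreal (g j x) * nn_cond_exp M (F (j - 1)) (\<lambda>y. ennreal (e j y)) x \<le> ennreal (g j x)"
          using ae
        proof (rule AE_mp, intro AE_I2 impI)
          fix x assume "nn_cond_exp M (F (j - 1)) (\<lambda>y. ennreal (e j y)) x \<le> 1"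
          then have "ennreal (g j x) * nn_cond_exp M (F (j - 1)) (\<lambda>y. ennreal (e j y)) x \<le> ennreal (g j x) * 1"
            by (rule mult_left_mono) simp
          then show "ennreal (g j x) * nn_cond_exp M (F (j - 1)) (\<lambda>y. ennreal (e j y)) x \<le> ennreal (g j x)"
            by simp
        qed
      qed
    qed
    also have "\<dots> \<le> (\<Sum>j\<in>{1..t}. \<integral>\<^sup>+x. ennreal (g j x) \<partial>M)"
      using Dsub by (intro sum_mono2) auto
    also have "\<dots> = (\<integral>\<^sup>+x. (\<Sum>j\<in>{1..t}. ennreal (g j x)) \<partial>M)"
      using gM by (intro nn_integral_sum[symmetric] measurable_compose[OF _ measurable_ennreal]) auto
    also have "\<dots> = (\<integral>\<^sup>+x. ennreal (\<alpha> * (1 - (\<Prod>j\<in>{1..t}. (1 - \<omega> j x)))) \<partial>M)"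
    proof (rule nn_integral_cong)
      fix x assume x: "x \<in> space M"
      have "(\<Sum>j\<in>{1..t}. ennreal (g j x)) = ennreal (\<Sum>j\<in>{1..t}. g j x)"
        using g_nn x by (intro sum_ennreal) auto
      also have "(\<Sum>j\<in>{1..t}. g j x) = \<alpha> * (1 - (\<Prod>j\<in>{1..t}. (1 - \<omega> j x)))"
        using part3 t x unfolding g_def by blast
      finally show "(\<Sum>j\<in>{1..t}. ennreal (g j x)) = ennreal (\<alpha> * (1 - (\<Prod>j\<in>{1..t}. (1 - \<omega> j x))))" .
    qed
    also have "\<dots> \<le> (\<integral>\<^sup>+x. ennreal \<alpha> \<partial>M)"
      using part3 t by (intro nn_integral_mono ennreal_leI) blast
    also have "\<dots> = ennreal \<alpha>" by (simp add: emeasure_space_1)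
    finally have I: "(\<integral>\<^sup>+x. ennreal (f x) \<partial>M) \<le> ennreal \<alpha>" .
    have "FDR M \<theta> al e t = integral\<^sup>L M f" unfolding FDR_def f_def D_def by (rule refl)
    also have "\<dots> = enn2real (\<integral>\<^sup>+x. ennreal (f x) \<partial>M)"
      using fM f_nn by (intro integral_eq_nn_integral) auto
    also have "\<dots> \<le> \<alpha>" using I assms(2) by (intro enn2real_leI) auto
    finally show "FDR M \<theta> al e t \<le> \<alpha>" .
  qed
  show ?thesis
    using part1 alpos al_meas part3 part5 unfolding F_def by blast
qed

end
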